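(* Let $v_1,\dots,v_m$ be nonzero vectors spanning $\mathbb{R}^n$ ($m\ge n$), and let $c=(c_i)_{i=1}^m$ with $c_i>0$ and $\sum_i c_i=n$. Define $\phi:\mathbb{R}^m\to\mathbb{R}$ by $\phi(x_1,\dots,x_m)=\log\det\big(\sum_{i=1}^m e^{x_i}v_i\otimes v_i\big)$, and let $\phi^*(y)=\sup_{x\in\mathbb{R}^m}(\langle y,x\rangle-\phi(x))$ be its Fenchel conjugate, with $\mathrm{dom}(\phi^* )=\{y;\ \phi^*(y)<+\infty\}$. Let $D_c=\inf\{\det(\sum_i\lambda_iv_i\otimes v_i)/\prod_i\lambda_i^{c_i};\ \lambda_i>0\}$ and $K=\mathrm{conv}\{1_I;\ |I|=n,\ d_I\ne0\}$. Then: (1) $\phi$ is convex; (2) $D_c=\exp(-\phi^*(c))$ (with $\exp(-\infty)=0$); (3) $D_c>0$ if and only if $c\in\mathrm{dom}(\phi^* )$; (4) the infimum $D_c$ is attained if and only if the supremum defining $\phi^*(c)$ is attained; (5) $\mathrm{dom}(\phi^* )=K$; (6) $D_c$ is attained whenever $c$ belongs to the relative interior of $K$.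
   Context: For $I\subset\{1,\dots,m\}$ with $|I|=n$: $d_I=\det((v_i)_{i\in I})^2$ and $1_I\in\mathbb{R}^m$ is the indicator vector of $I$. $v\otimes v=vv^T$. *)

theory Defs
  imports "HOL-Analysis.Analysis"
begin

definition outer :: "real^'n \<Rightarrow> real^'n^'n" where
  "outer v = (\<chi> a b. v$a * v$b)"

definition phi :: "('m::finite \<Rightarrow> real^'n) \<Rightarrow> real^'m \<Rightarrow> real" where
  "phi v x = ln (det (\<Sum>i\<in>UNIV. exp (x$i) *\<^sub>R outer (v i)))"

definition phi_star :: "('m::finite \<Rightarrow> real^'n) \<Rightarrow> real^'m \<Rightarrow> ereal" where
  "phi_star v y = (SUP x\<in>UNIV. ereal (y \<bullet> x - phi v x))"

definition dom_phi_star :: "('m::finite \<Rightarrow> real^'n) \<Rightarrow> (real^'m) set" where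
  "dom_phi_star v = {y. phi_star v y < \<infinity>}"

definition BL_ratio :: "('m::finite \<Rightarrow> real^'n) \<Rightarrow> real^'m \<Rightarrow> real^'m \<Rightarrow> real" where
  "BL_ratio v c lam = det (\<Sum>i\<in>UNIV. lam$i *\<^sub>R outer (v i)) / (\<Prod>i\<in>UNIV. (lam$i) powr (c$i))"

definition D_const :: "('m::finite \<Rightarrow> real^'n) \<Rightarrow> real^'m \<Rightarrow> real" where
  "D_const v c = Inf (BL_ratio v c ` {lam. \<forall>i. lam$i > 0})"

text \<open>d_I = det((v_i)_{i in I})^2, the columns ordered by some bijection 'n -> I
  (the value does not depend on the ordering); 0 if |I| \<noteq> n.\<close>
definition d_I :: "('m::finite \<Rightarrow> real^'n) \<Rightarrow> 'm set \<Rightarrow> real" where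
  "d_I v I = (if \<exists>f::'n \<Rightarrow> 'm. bij_betw f UNIV I
     then (let f = (SOME f::'n \<Rightarrow> 'm. bij_betw f UNIV I) in (det (\<chi> a b. v (f b) $ a))^2)
     else 0)"

definition indic_vec :: "'m set \<Rightarrow> real^'m::finite" where
  "indic_vec I = (\<chi> i. if i \<in> I then 1 else 0)"

definition K_poly :: "('m::finite \<Rightarrow> real^'n) \<Rightarrow> (real^'m) set" where
  "K_poly v = convex hull {indic_vec I | I. card I = CARD('n) \<and> d_I v I \<noteq> 0}"

end

theory Submission
  imports Defs
begin

lemma det_rows_sum_gen:
  fixes a :: "'n::finite \<Rightarrow> 'k \<Rightarrow> 'a::comm_ring_1^'n"
  assumes fS: "finite S" and fT: "finite T"
  shows "det ((\<chi> i. if i \<in> T then sum (a i) S else c i)::'a^'n^'n) =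
    (\<Sum>f\<in>PiE T (\<lambda>_. S). det ((\<chi> i. if i \<in> T then a i (f i) else c i)::'a^'n^'n))"
  using fT
proof (induct T arbitrary: c)
  case empty
  then show ?case by simp
next
  case (insert z T c)
  define c' where "c' i = (if i = z then sum (a i) S else c i)" for i
  have "det ((\<chi> i. if i \<in> insert z T then sum (a i) S else c i)::'a^'n^'n)
     = det ((\<chi> i. if i \<in> T then sum (a i) S else c' i)::'a^'n^'n)"
    by (rule arg_cong[where f=det]) (vector c'_def)
  also have "\<dots> = (\<Sum>g\<in>PiE T (\<lambda>_. S). det ((\<chi> i. if i \<in> T then a i (g i) else c' i)::'a^'n^'n))"
    by (rule insert.hyps)
  also have "\<dots> = (\<Sum>g\<in>PiE T (\<lambda>_. S). \<Sum>y\<in>S. det ((\<chi> i. if i = z then a i y else (if i \<in> T then a i (g i) else c i))::'a^'n^'n))"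
  proof (rule sum.cong[OF refl])
    fix g assume "g \<in> PiE T (\<lambda>_. S)"
    have "det ((\<chi> i. if i \<in> T then a i (g i) else c' i)::'a^'n^'n) =
      det ((\<chi> i. if i = z then sum (a i) S else (if i \<in> T then a i (g i) else c i))::'a^'n^'n)"
      by (rule arg_cong[where f=det]) (use insert.hyps(2) in \<open>vector c'_def\<close>)
    also have "\<dots> = (\<Sum>y\<in>S. det ((\<chi> i. if i = z then a i y else (if i \<in> T then a i (g i) else c i))::'a^'n^'n))"
      by (rule det_linear_row_sum[OF fS])
    finally show "det ((\<chi> i. if i \<in> T then a i (g i) else c' i)::'a^'n^'n) = \<dots>" .
  qed
  also have "\<dots> = (\<Sum>(y,g)\<in>S \<times> PiE T (\<lambda>_. S). det ((\<chi> i. if i = z then a i y else (if i \<in> T then a i (g i) else c i))::'a^'n^'n))"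
    by (subst sum.cartesian_product[symmetric]) (rule sum.swap)
  also have "\<dots> = (\<Sum>f\<in>PiE (insert z T) (\<lambda>_. S). det ((\<chi> i. if i \<in> insert z T then a i (f i) else c i)::'a^'n^'n))"
  proof -
    have inj: "inj_on (\<lambda>(y, g). g(z := y)) (S \<times> PiE T (\<lambda>_. S))"
      using inj_combinator[of z T "\<lambda>_. S"] insert.hyps(2) by simp
    have im: "PiE (insert z T) (\<lambda>_. S) = (\<lambda>(y, g). g(z := y)) ` (S \<times> PiE T (\<lambda>_. S))"
      using PiE_insert_eq[of z T "\<lambda>_. S"] by simp
    show ?thesis
      unfolding im sum.reindex[OF inj]
      apply (rule sum.cong[OF refl])
      apply clarsimp
      apply (rule arg_cong[where f=det])
      using insert.hyps(2) by (vector)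
  qed
  finally show ?case .
qed

lemma outer_row: "(\<Sum>i\<in>UNIV. lam i *\<^sub>R outer (v i)) = (\<chi> a. \<Sum>i\<in>UNIV. (lam i * v i $ a) *s v i)"
  for v :: "'m::finite \<Rightarrow> real^'n"
  by (vector outer_def sum_component mult.assoc)

lemma det_outer_sum1:
  fixes v :: "'m::finite \<Rightarrow> real^'n"
  shows "det (\<Sum>i\<in>UNIV. lam i *\<^sub>R outer (v i)) =
    (\<Sum>f\<in>UNIV. (\<Prod>a\<in>UNIV. lam (f a) * v (f a) $ a) * det (\<chi> a. v (f a)))"
proof -
  have "det (\<Sum>i\<in>UNIV. lam i *\<^sub>R outer (v i)) = 
     (\<Sum>f\<in>PiE UNIV (\<lambda>_. UNIV::'m set). det (\<chi> a. (lam (f a) * v (f a) $ a) *s v (f a)))"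
    unfolding outer_row using det_rows_sum_gen[of UNIV UNIV "\<lambda>a i. (lam i * v i $ a) *s v i"] by simp
  also have "\<dots> = (\<Sum>f\<in>UNIV. (\<Prod>a\<in>UNIV. lam (f a) * v (f a) $ a) * det (\<chi> a. v (f a)))"
    by (simp add: det_rows_mul)
  finally show ?thesis .
qed

lemma inner_sum_I:
  fixes v :: "'m::finite \<Rightarrow> real^'n"
  assumes cI: "card I = CARD('n)"
  shows "(\<Sum>f\<in>{f::'n\<Rightarrow>'m. inj f \<and> range f = I}. (\<Prod>a\<in>UNIV. lam (f a) * v (f a) $ a) * det (\<chi> a. v (f a)))
     = d_I v I * (\<Prod>i\<in>I. lam i)"
proof -
  have ex: "\<exists>g::'n\<Rightarrow>'m. bij_betw g UNIV I"
    using finite_same_card_bij[of "UNIV::'n set" I] cI by (metis finite finite_UNIV)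
  define g where "g = (SOME g::'n\<Rightarrow>'m. bij_betw g UNIV I)"
  have g: "bij_betw g UNIV I" unfolding g_def by (rule someI_ex[OF ex])
  define C where "C = (\<chi> a b. v (g b) $ a)"
  have dI: "d_I v I = (det C)^2"
    unfolding d_I_def C_def g_def using ex by simp
  have injg: "inj g" using g by (simp add: bij_betw_def)
  have rg: "range g = I" using g by (simp add: bij_betw_def)
  have im: "{f::'n\<Rightarrow>'m. inj f \<and> range f = I} = (\<lambda>p. g \<circ> p) ` {p. p permutes (UNIV::'n set)}"
  proof (intro set_eqI iffI)
    fix f :: "'n \<Rightarrow> 'm" assume "f \<in> {f. inj f \<and> range f = I}"
    then have f: "inj f" "range f = I" by auto
    define p where "p = inv_into UNIV g \<circ> f"
    have "bij_betw f UNIV I" using f by (simp add: bij_betw_def)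
    moreover have "bij_betw (inv_into UNIV g) I UNIV" using g by (simp add: bij_betw_inv_into)
    ultimately have "bij_betw p UNIV UNIV" unfolding p_def by (rule bij_betw_trans)
    then have "p permutes UNIV" using bij_imp_permutes[of p UNIV] by simp
    moreover have "f = g \<circ> p" unfolding p_def using f rg
      by (auto simp: fun_eq_iff f_inv_into_f)
    ultimately show "f \<in> (\<lambda>p. g \<circ> p) ` {p. p permutes UNIV}" by blast
  next
    fix f assume "f \<in> (\<lambda>p. g \<circ> p) ` {p. p permutes (UNIV::'n set)}"
    then obtain p where p: "p permutes UNIV" "f = g \<circ> p" by blast
    have "inj f" using p injg permutes_inj inj_compose by blast
    moreover have "range f = I" using p(2) rg permutes_image[OF p(1)] by (metis image_comp)
    ultimately show "f \<in> {f. inj f \<and> range f = I}" by blast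
  qed
  have injc: "inj_on (\<lambda>p. g \<circ> p) {p. p permutes (UNIV::'n set)}"
    by (rule inj_onI) (use injg in \<open>auto simp: fun_eq_iff inj_def\<close>)
  define B where "B = (\<chi> a. v (g a))"
  have detB: "det B = det C"
  proof -
    have "B = transpose C" by (simp add: B_def C_def transpose_def)
    then show ?thesis by simp
  qed
  have L: "(\<Prod>a\<in>UNIV. lam (g (p a))) = (\<Prod>i\<in>I. lam i)" if p: "p permutes UNIV" for p
  proof -
    have "(\<Prod>a\<in>UNIV. lam (g (p a))) = (\<Prod>a\<in>UNIV. lam (g a))"
      using prod.permute[OF p, of "\<lambda>a. lam (g a)"] by (simp add: o_def)
    also have "\<dots> = (\<Prod>i\<in>I. lam i)" using prod.reindex_bij_betw[OF g, of lam] .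
    finally show ?thesis .
  qed
  have dp: "det (\<chi> a. v (g (p a))) = of_int (sign p) * det B" if p: "p permutes UNIV" for p
    using det_permute_rows[OF p, of B] by (simp add: B_def)
  have "(\<Sum>f\<in>{f::'n\<Rightarrow>'m. inj f \<and> range f = I}. (\<Prod>a\<in>UNIV. lam (f a) * v (f a) $ a) * det (\<chi> a. v (f a)))
     = (\<Sum>p\<in>{p. p permutes (UNIV::'n set)}. (\<Prod>a\<in>UNIV. lam (g (p a)) * v (g (p a)) $ a) * det (\<chi> a. v (g (p a))))"
    unfolding im sum.reindex[OF injc] by (simp add: o_def)
  also have "\<dots> = (\<Sum>p\<in>{p. p permutes (UNIV::'n set)}. ((\<Prod>i\<in>I. lam i) * det B) * (of_int (sign p) * (\<Prod>a\<in>UNIV. C $ a $ p a)))"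
    by (rule sum.cong[OF refl]) (simp add: L dp prod.distrib C_def)
  also have "\<dots> = ((\<Prod>i\<in>I. lam i) * det B) * det C"
    by (simp add: det_def sum_distrib_left)
  also have "\<dots> = d_I v I * (\<Prod>i\<in>I. lam i)" by (simp add: dI detB power2_eq_square)
  finally show ?thesis .
qed

lemma cauchy_binet_outer:
  fixes v :: "'m::finite \<Rightarrow> real^'n"
  shows "det (\<Sum>i\<in>UNIV. lam i *\<^sub>R outer (v i)) =
    (\<Sum>I\<in>{I. card I = CARD('n)}. d_I v I * (\<Prod>i\<in>I. lam i))"
proof -
  let ?T = "\<lambda>f::'n\<Rightarrow>'m. (\<Prod>a\<in>UNIV. lam (f a) * v (f a) $ a) * det (\<chi> a. v (f a))"
  have z: "?T f = 0" if "f \<in> UNIV - {f. inj f}" for f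
  proof -
    from that obtain a b where ab: "a \<noteq> b" "f a = f b" by (auto simp: inj_def)
    have "det (\<chi> a. v (f a)) = 0"
      by (rule det_identical_rows[OF ab(1)]) (simp add: row_def ab(2))
    then show ?thesis by simp
  qed
  have "det (\<Sum>i\<in>UNIV. lam i *\<^sub>R outer (v i)) = (\<Sum>f\<in>UNIV. ?T f)" by (rule det_outer_sum1)
  also have "\<dots> = (\<Sum>f\<in>{f. inj f}. ?T f)"
    by (rule sum.mono_neutral_right) (use z in auto)
  also have "\<dots> = (\<Sum>I\<in>{I. card I = CARD('n)}. \<Sum>f\<in>{f \<in> {f. inj f}. range f = I}. ?T f)"
    by (rule sum.group[symmetric]) (auto simp: card_image)
  also have "\<dots> = (\<Sum>I\<in>{I. card I = CARD('n)}. d_I v I * (\<Prod>i\<in>I. lam i))"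
    by (rule sum.cong[OF refl]) (use inner_sum_I in auto)
  finally show ?thesis .
qed

lemma exp_convex_ineq:
  fixes t :: real assumes "0 \<le> t" "t \<le> 1"
  shows "exp ((1 - t) * p + t * q) \<le> (1 - t) * exp p + t * exp q"
  using convex_onD[OF exp_convex, of t p q] assms by simp

lemma lse_convex:
  fixes a :: "'k \<Rightarrow> real^'m::finite" and w :: "'k \<Rightarrow> real"
  assumes fS: "finite S" and Sne: "S \<noteq> {}" and wpos: "\<forall>k\<in>S. w k > 0"
  shows "convex_on UNIV (\<lambda>x. ln (\<Sum>k\<in>S. w k * exp (a k \<bullet> x)))"
proof (rule convex_onI)
  define E where "E x = (\<Sum>k\<in>S. w k * exp (a k \<bullet> x))" for x
  have Epos: "E x > 0" for x
    unfolding E_def using fS Sne wpos by (intro sum_pos) auto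
  fix t :: real and x y :: "real^'m"
  assume t: "0 < t" "t < 1"
  define A where "A = ln (E x)"
  define B where "B = ln (E y)"
  have eA: "exp A = E x" using Epos by (simp add: A_def)
  have eB: "exp B = E y" using Epos by (simp add: B_def)
  have trm: "w k * exp (a k \<bullet> ((1 - t) *\<^sub>R x + t *\<^sub>R y)) \<le>
     exp ((1 - t) * A + t * B) * ((1 - t) * (w k * exp (a k \<bullet> x) / exp A) + t * (w k * exp (a k \<bullet> y) / exp B))"
    if k: "k \<in> S" for k
  proof -
    have "exp (a k \<bullet> ((1 - t) *\<^sub>R x + t *\<^sub>R y)) =
        exp ((1 - t) * A + t * B) * exp ((1 - t) * (a k \<bullet> x - A) + t * (a k \<bullet> y - B))"
      by (simp add: inner_add_right exp_add[symmetric] algebra_simps)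
    also have "\<dots> \<le> exp ((1 - t) * A + t * B) * ((1 - t) * exp (a k \<bullet> x - A) + t * exp (a k \<bullet> y - B))"
      using exp_convex_ineq[of t] t by (intro mult_left_mono) auto
    finally have "exp (a k \<bullet> ((1 - t) *\<^sub>R x + t *\<^sub>R y)) \<le>
        exp ((1 - t) * A + t * B) * ((1 - t) * exp (a k \<bullet> x - A) + t * exp (a k \<bullet> y - B))" .
    then have "w k * exp (a k \<bullet> ((1 - t) *\<^sub>R x + t *\<^sub>R y)) \<le>
        w k * (exp ((1 - t) * A + t * B) * ((1 - t) * exp (a k \<bullet> x - A) + t * exp (a k \<bullet> y - B)))"
      using wpos k by (intro mult_left_mono) auto
    then show ?thesis by (simp add: exp_diff algebra_simps)
  qed
  have "E ((1 - t) *\<^sub>R x + t *\<^sub>R y) \<le> (\<Sum>k\<in>S. exp ((1 - t) * A + t * B) * ((1 - t) * (w k * exp (a k \<bullet> x) / exp A) + t * (w k * exp (a k \<bullet> y) / exp B)))"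
    unfolding E_def by (rule sum_mono) (rule trm)
  also have "\<dots> = exp ((1 - t) * A + t * B) * ((1 - t) * (E x / exp A) + t * (E y / exp B))"
    unfolding E_def by (simp only: sum_distrib_left sum_divide_distrib sum.distrib[symmetric] times_divide_eq_right)
  also have "\<dots> = exp ((1 - t) * A + t * B)" using eA eB Epos[of x] Epos[of y] by simp
  finally have "E ((1 - t) *\<^sub>R x + t *\<^sub>R y) \<le> exp ((1 - t) * A + t * B)" .
  then have "ln (E ((1 - t) *\<^sub>R x + t *\<^sub>R y)) \<le> (1 - t) * A + t * B"
    using Epos[of "(1 - t) *\<^sub>R x + t *\<^sub>R y"] by (metis exp_gt_zero ln_exp ln_le_cancel_iff)
  then show "ln (\<Sum>k\<in>S. w k * exp (a k \<bullet> ((1 - t) *\<^sub>R x + t *\<^sub>R y))) \<le>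
      (1 - t) * ln (\<Sum>k\<in>S. w k * exp (a k \<bullet> x)) + t * ln (\<Sum>k\<in>S. w k * exp (a k \<bullet> y))"
    by (simp add: E_def A_def B_def)
qed simp

lemma hull_rep:
  fixes a :: "'k \<Rightarrow> 'b::real_vector"
  assumes fS: "finite S" and inj: "inj_on a S" and q: "q \<in> convex hull (a ` S)"
  shows "\<exists>\<nu>. (\<forall>k\<in>S. \<nu> k \<ge> 0) \<and> sum \<nu> S = 1 \<and> (\<Sum>k\<in>S. \<nu> k *\<^sub>R a k) = q"
proof -
  from q obtain u where u: "\<forall>p\<in>a ` S. 0 \<le> u p" "sum u (a ` S) = 1" "(\<Sum>p\<in>a ` S. u p *\<^sub>R p) = q"
    using convex_hull_finite[of "a ` S"] fS by auto
  show ?thesis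
    by (rule exI[of _ "\<lambda>k. u (a k)"]) (use u inj in \<open>auto simp: sum.reindex\<close>)
qed

lemma lse_lower:
  fixes a :: "'k \<Rightarrow> real^'m::finite"
  assumes fS: "finite S" and wpos: "\<forall>k\<in>S. w k > 0" and k: "k \<in> S"
  shows "ln (w k) + a k \<bullet> x \<le> ln (\<Sum>k\<in>S. w k * exp (a k \<bullet> x))"
proof -
  have "w k * exp (a k \<bullet> x) \<le> (\<Sum>k\<in>S. w k * exp (a k \<bullet> x))"
    by (rule member_le_sum) (use wpos k fS in \<open>auto intro: less_imp_le\<close>)
  moreover have "w k * exp (a k \<bullet> x) > 0" using wpos k by simp
  ultimately have "ln (w k * exp (a k \<bullet> x)) \<le> ln (\<Sum>k\<in>S. w k * exp (a k \<bullet> x))"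
    by simp
  moreover have "w k > 0" using wpos k by auto
  ultimately show ?thesis by (simp add: ln_mult)
qed

lemma lse_dom:
  fixes a :: "'k \<Rightarrow> real^'m::finite"
  assumes fS: "finite S" and Sne: "S \<noteq> {}" and wpos: "\<forall>k\<in>S. w k > 0" and inj: "inj_on a S"
  shows "(SUP x. ereal (y \<bullet> x - ln (\<Sum>k\<in>S. w k * exp (a k \<bullet> x)))) < \<infinity> \<longleftrightarrow> y \<in> convex hull (a ` S)"
proof
  assume y: "y \<in> convex hull (a ` S)"
  obtain \<mu> where mu: "\<forall>k\<in>S. \<mu> k \<ge> 0" "sum \<mu> S = 1" "(\<Sum>k\<in>S. \<mu> k *\<^sub>R a k) = y"
    using hull_rep[OF fS inj y] by blast
  define Bd where "Bd = (\<Sum>k\<in>S. \<bar>ln (w k)\<bar>)"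
  have "y \<bullet> x - ln (\<Sum>k\<in>S. w k * exp (a k \<bullet> x)) \<le> Bd" for x
  proof -
    let ?F = "ln (\<Sum>k\<in>S. w k * exp (a k \<bullet> x))"
    have yx: "y \<bullet> x = (\<Sum>k\<in>S. \<mu> k * (a k \<bullet> x))"
      by (subst mu(3)[symmetric]) (simp add: inner_sum_left)
    have "y \<bullet> x - ?F = (\<Sum>k\<in>S. \<mu> k * (a k \<bullet> x - ?F))"
      using mu(2) by (simp add: yx right_diff_distrib sum_subtractf sum_distrib_right[symmetric])
    also have "\<dots> \<le> (\<Sum>k\<in>S. \<mu> k * Bd)"
    proof (rule sum_mono)
      fix k assume k: "k \<in> S"
      have "a k \<bullet> x - ?F \<le> - ln (w k)" using lse_lower[OF fS wpos k, where x=x and a=a] by simp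
      also have "\<dots> \<le> Bd" unfolding Bd_def
        using member_le_sum[of k S "\<lambda>k. \<bar>ln (w k)\<bar>"] k fS by auto
      finally show "\<mu> k * (a k \<bullet> x - ?F) \<le> \<mu> k * Bd" using mu(1) k by (intro mult_left_mono) auto
    qed
    also have "\<dots> = Bd" using mu(2) by (simp add: sum_distrib_right[symmetric])
    finally show ?thesis .
  qed
  then have "(SUP x. ereal (y \<bullet> x - ln (\<Sum>k\<in>S. w k * exp (a k \<bullet> x)))) \<le> ereal Bd"
    by (intro SUP_least) simp
  then show "(SUP x. ereal (y \<bullet> x - ln (\<Sum>k\<in>S. w k * exp (a k \<bullet> x)))) < \<infinity>"
    by (rule order.strict_trans1) simp
next
  assume lt: "(SUP x. ereal (y \<bullet> x - ln (\<Sum>k\<in>S. w k * exp (a k \<bullet> x)))) < \<infinity>"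
  show "y \<in> convex hull (a ` S)"
  proof (rule ccontr)
    assume ny: "y \<notin> convex hull (a ` S)"
    have "closed (convex hull (a ` S))"
      using finite_imp_compact_convex_hull[of "a ` S"] fS compact_imp_closed by blast
    then obtain z b where zb: "z \<bullet> y < b" "\<forall>q\<in>convex hull (a ` S). z \<bullet> q > b"
      using separating_hyperplane_closed_point[OF convex_convex_hull _ ny] by blast
    have zak: "z \<bullet> a k > b" if "k \<in> S" for k
      using zb(2) hull_subset[of "a ` S" convex] that by auto
    define \<delta> where "\<delta> = b - z \<bullet> y"
    have dpos: "\<delta> > 0" using zb(1) by (simp add: \<delta>_def)
    define W where "W = (\<Sum>k\<in>S. w k)"
    have Wpos: "W > 0" unfolding W_def using fS Sne wpos by (intro sum_pos) auto
    have low: "y \<bullet> (- s *\<^sub>R z) - ln (\<Sum>k\<in>S. w k * exp (a k \<bullet> (- s *\<^sub>R z))) \<ge> s * \<delta> - ln W"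
      if s: "s \<ge> 0" for s
    proof -
      have "(\<Sum>k\<in>S. w k * exp (a k \<bullet> (- s *\<^sub>R z))) \<le> (\<Sum>k\<in>S. w k * exp (- s * b))"
      proof (rule sum_mono)
        fix k assume k: "k \<in> S"
        have "- s * (z \<bullet> a k) \<le> - s * b" using zak[OF k] s by (intro mult_left_mono_neg) auto
        then have "exp (a k \<bullet> (- s *\<^sub>R z)) \<le> exp (- s * b)" by (simp add: inner_commute)
        then show "w k * exp (a k \<bullet> (- s *\<^sub>R z)) \<le> w k * exp (- s * b)"
          using wpos k by (intro mult_left_mono) auto
      qed
      also have "\<dots> = W * exp (- s * b)" by (simp add: W_def sum_distrib_right)
      finally have le: "(\<Sum>k\<in>S. w k * exp (a k \<bullet> (- s *\<^sub>R z))) \<le> W * exp (- s * b)" .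
      have pos: "(\<Sum>k\<in>S. w k * exp (a k \<bullet> (- s *\<^sub>R z))) > 0"
        using fS Sne wpos by (intro sum_pos) auto
      have "ln (\<Sum>k\<in>S. w k * exp (a k \<bullet> (- s *\<^sub>R z))) \<le> ln (W * exp (- s * b))"
        using le pos by simp
      also have "\<dots> = ln W - s * b" using Wpos by (simp add: ln_mult)
      finally show ?thesis by (simp add: \<delta>_def algebra_simps inner_commute)
    qed
    have "(SUP x. ereal (y \<bullet> x - ln (\<Sum>k\<in>S. w k * exp (a k \<bullet> x)))) = \<infinity>"
    proof (rule SUP_PInfty)
      fix n :: nat
      define s where "s = (real n + \<bar>ln W\<bar>) / \<delta>"
      have s0: "s \<ge> 0" unfolding s_def using dpos by simp
      have "s * \<delta> = real n + \<bar>ln W\<bar>" unfolding s_def using dpos by simp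
      then have "real n \<le> s * \<delta> - ln W" by linarith
      then have "real n \<le> y \<bullet> (- s *\<^sub>R z) - ln (\<Sum>k\<in>S. w k * exp (a k \<bullet> (- s *\<^sub>R z)))"
        using low[OF s0] by linarith
      then show "\<exists>x\<in>UNIV. ereal (real n) \<le> ereal (y \<bullet> x - ln (\<Sum>k\<in>S. w k * exp (a k \<bullet> x)))"
        by (intro bexI[of _ "- s *\<^sub>R z"]) auto
    qed
    then show False using lt by simp
  qed
qed

lemma relint_pos_rep:
  fixes a :: "'k \<Rightarrow> real^'m::finite"
  assumes fS: "finite S" and Sne: "S \<noteq> {}" and inj: "inj_on a S"
    and y: "y \<in> rel_interior (convex hull (a ` S))"
  shows "\<exists>\<mu>. (\<forall>k\<in>S. \<mu> k > 0) \<and> sum \<mu> S = 1 \<and> (\<Sum>k\<in>S. \<mu> k *\<^sub>R a k) = y"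
proof -
  let ?H = "convex hull (a ` S)"
  define N where "N = real (card S)"
  have Npos: "N > 0" using fS Sne by (simp add: N_def card_gt_0_iff)
  define b where "b = (\<Sum>k\<in>S. (1 / N) *\<^sub>R a k)"
  have bH: "b \<in> ?H" unfolding b_def
    by (rule convex_sum[OF fS convex_convex_hull]) (use hull_subset[of "a ` S" convex] N_def fS Sne in \<open>auto simp: card_gt_0_iff\<close>)
  have Hne: "?H \<noteq> {}" using bH by auto
  obtain e where e: "e > 1" "(1 - e) *\<^sub>R b + e *\<^sub>R y \<in> ?H"
    using y bH convex_rel_interior_iff[OF convex_convex_hull Hne] by blast
  obtain \<nu> where nu: "\<forall>k\<in>S. \<nu> k \<ge> 0" "sum \<nu> S = 1" "(\<Sum>k\<in>S. \<nu> k *\<^sub>R a k) = (1 - e) *\<^sub>R b + e *\<^sub>R y"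
    using hull_rep[OF fS inj e(2)] by blast
  define \<mu> where "\<mu> k = (\<nu> k + (e - 1) / N) / e" for k
  have "\<forall>k\<in>S. \<mu> k > 0" unfolding \<mu>_def using nu(1) e(1) Npos
    by (auto intro!: divide_pos_pos add_nonneg_pos)
  moreover have "sum \<mu> S = 1"
    unfolding \<mu>_def using nu(2) e(1) Npos
    by (simp add: sum_divide_distrib[symmetric] sum.distrib N_def)
  moreover have "(\<Sum>k\<in>S. \<mu> k *\<^sub>R a k) = y"
  proof -
    have "(\<Sum>k\<in>S. \<mu> k *\<^sub>R a k) = (1 / e) *\<^sub>R ((\<Sum>k\<in>S. \<nu> k *\<^sub>R a k) + (e - 1) *\<^sub>R b)"
      unfolding \<mu>_def b_def
      by (simp add: scaleR_sum_right sum.distrib[symmetric] scaleR_add_left[symmetric] add_divide_distrib)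
    also have "\<dots> = y" using e(1) by (simp add: nu(3) algebra_simps)
    finally show ?thesis .
  qed
  ultimately show ?thesis by blast
qed

lemma lse_max:
  fixes a :: "'k::finite \<Rightarrow> real^'m::finite"
  assumes Sne: "S \<noteq> {}" and wpos: "\<forall>k\<in>S. w k > 0" and inj: "inj_on a S"
    and y: "y \<in> rel_interior (convex hull (a ` S))"
  shows "\<exists>x0. \<forall>x. y \<bullet> x - ln (\<Sum>k\<in>S. w k * exp (a k \<bullet> x)) \<le> y \<bullet> x0 - ln (\<Sum>k\<in>S. w k * exp (a k \<bullet> x0))"
proof -
  have fS: "finite S" by simp
  obtain \<mu> where mu: "\<forall>k\<in>S. \<mu> k > 0" "sum \<mu> S = 1" "(\<Sum>k\<in>S. \<mu> k *\<^sub>R a k) = y"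
    using relint_pos_rep[OF fS Sne inj y] by blast
  define L :: "real^'m \<Rightarrow> real^'k" where "L x = (\<chi> k. if k \<in> S then a k \<bullet> x - y \<bullet> x else 0)" for x
  define G :: "real^'k \<Rightarrow> real" where "G u = (\<Sum>k\<in>S. w k * exp (u $ k))" for u
  have linL: "linear L"
    by (rule linearI) (auto simp: L_def vec_eq_iff inner_add_right algebra_simps)
  have Gpos: "G u > 0" for u unfolding G_def using Sne wpos by (intro sum_pos) auto
  have contG: "continuous_on UNIV G" unfolding G_def by (intro continuous_intros)
  define G0 where "G0 = G 0"
  define U where "U = range L"
  have subU: "subspace U" unfolding U_def by (rule linear_subspace_image[OF linL subspace_UNIV])
  define C where "C = U \<inter> {u. G u \<le> G0}"
  have closedC: "closed C" unfolding C_def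
    by (intro closed_Int closed_subspace[OF subU] closed_Collect_le contG continuous_on_const)
  define R1 where "R1 = (\<Sum>k\<in>S. \<bar>ln G0 - ln (w k)\<bar>)"
  have R1: "R1 \<ge> 0" unfolding R1_def by (intro sum_nonneg) auto
  define R2 where "R2 = R1 + R1 * (\<Sum>k\<in>S. 1 / \<mu> k)"
  have bnd: "\<bar>u $ k\<bar> \<le> R2" if u: "u \<in> C" for u k
  proof -
    from u obtain x where ux: "u = L x" and Gu: "G u \<le> G0" unfolding C_def U_def by auto
    have up: "u $ j \<le> R1" if j: "j \<in> S" for j
    proof -
      have "w j * exp (u $ j) \<le> G u" unfolding G_def
        by (rule member_le_sum) (use wpos j in \<open>auto intro: less_imp_le\<close>)
      then have "w j * exp (u $ j) \<le> G0" using Gu by simp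
      then have "ln (w j * exp (u $ j)) \<le> ln G0" using wpos j Gpos[of 0] unfolding G0_def by (subst ln_le_cancel_iff) auto
      then have "u $ j \<le> ln G0 - ln (w j)" using bspec[OF wpos j] by (simp add: ln_mult)
      also have "\<dots> \<le> R1" unfolding R1_def
        using member_le_sum[of j S "\<lambda>k. \<bar>ln G0 - ln (w k)\<bar>"] j by auto
      finally show ?thesis .
    qed
    have sum0: "(\<Sum>j\<in>S. \<mu> j * u $ j) = 0"
    proof -
      have yx: "y \<bullet> x = (\<Sum>j\<in>S. \<mu> j * (a j \<bullet> x))"
        by (subst mu(3)[symmetric]) (simp add: inner_sum_left)
      have "(\<Sum>j\<in>S. \<mu> j * u $ j) = (\<Sum>j\<in>S. \<mu> j * (a j \<bullet> x - y \<bullet> x))"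
        by (rule sum.cong) (auto simp: ux L_def)
      also have "\<dots> = 0" using mu(2)
        by (simp add: right_diff_distrib sum_subtractf yx sum_distrib_right[symmetric])
      finally show ?thesis .
    qed
    show ?thesis
    proof (cases "k \<in> S")
      case False
      then show ?thesis using R1 mu(1) by (simp add: ux L_def R2_def sum_nonneg less_imp_le)
    next
      case True
      have "\<mu> k * u $ k = - (\<Sum>j\<in>S - {k}. \<mu> j * u $ j)"
        using sum0 sum.remove[OF fS True, of "\<lambda>j. \<mu> j * u $ j"] by simp
      moreover have "(\<Sum>j\<in>S - {k}. \<mu> j * u $ j) \<le> (\<Sum>j\<in>S - {k}. \<mu> j * R1)"
        by (rule sum_mono) (use up mu(1) in \<open>auto intro: mult_left_mono less_imp_le\<close>)
      moreover have "(\<Sum>j\<in>S - {k}. \<mu> j * R1) \<le> (\<Sum>j\<in>S. \<mu> j * R1)"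
        by (rule sum_mono2) (use mu(1) R1 in auto)
      moreover have "(\<Sum>j\<in>S. \<mu> j * R1) = R1" using mu(2) by (simp add: sum_distrib_right[symmetric])
      ultimately have "\<mu> k * u $ k \<ge> - R1" by linarith
      then have lo: "u $ k \<ge> - R1 / \<mu> k" using mu(1) True by (simp add: field_simps)
      have "R1 / \<mu> k = R1 * (1 / \<mu> k)" by simp
      also have "\<dots> \<le> R1 * (\<Sum>j\<in>S. 1 / \<mu> j)"
        using member_le_sum[of k S "\<lambda>j. 1 / \<mu> j"] True mu(1) R1
        by (intro mult_left_mono) (auto intro: less_imp_le)
      finally have "R1 / \<mu> k \<le> R1 * (\<Sum>j\<in>S. 1 / \<mu> j)" .
      moreover have "R1 / \<mu> k \<ge> 0" using R1 bspec[OF mu(1) True] by simp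
      ultimately show ?thesis using lo up[OF True] R1 unfolding R2_def abs_le_iff by linarith
    qed
  qed
  have "bounded C"
  proof -
    have "norm u \<le> real CARD('k) * R2" if "u \<in> C" for u
    proof -
      have "norm u \<le> (\<Sum>k\<in>UNIV. \<bar>u $ k\<bar>)" by (rule norm_le_l1_cart)
      also have "\<dots> \<le> (\<Sum>k\<in>(UNIV::'k set). R2)" by (rule sum_mono) (rule bnd[OF that])
      finally show ?thesis by simp
    qed
    then show ?thesis unfolding bounded_iff by blast
  qed
  then have compC: "compact C" using closedC by (simp add: compact_eq_bounded_closed)
  have L0: "L 0 = 0" using linear_0[OF linL] .
  have C0: "0 \<in> C" unfolding C_def U_def G0_def using L0 by (auto intro: range_eqI[of _ _ 0])
  obtain u0 where u0: "u0 \<in> C" "\<forall>u\<in>C. G u0 \<le> G u"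
    using continuous_attains_inf[OF compC _ continuous_on_subset[OF contG]] C0 by blast
  obtain x0 where x0: "u0 = L x0" using u0(1) unfolding C_def U_def by auto
  have minG: "G (L x0) \<le> G (L x)" for x
  proof (cases "G (L x) \<le> G0")
    case True
    then have "L x \<in> C" unfolding C_def U_def by auto
    then show ?thesis using u0 x0 by auto
  next
    case False
    moreover have "G u0 \<le> G0" using u0(2) C0 G0_def by auto
    ultimately show ?thesis using x0 by simp
  qed
  have ident: "y \<bullet> x - ln (\<Sum>k\<in>S. w k * exp (a k \<bullet> x)) = - ln (G (L x))" for x
  proof -
    have "G (L x) = exp (- (y \<bullet> x)) * (\<Sum>k\<in>S. w k * exp (a k \<bullet> x))"
      unfolding G_def L_def sum_distrib_left
      by (rule sum.cong) (auto simp: exp_diff exp_minus field_simps)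
    moreover have "(\<Sum>k\<in>S. w k * exp (a k \<bullet> x)) > 0" using Sne wpos by (intro sum_pos) auto
    ultimately show ?thesis by (simp add: ln_mult)
  qed
  show ?thesis
  proof (intro exI allI)
    fix x
    have "ln (G (L x0)) \<le> ln (G (L x))" using minG[of x] Gpos by simp
    then show "y \<bullet> x - ln (\<Sum>k\<in>S. w k * exp (a k \<bullet> x)) \<le> y \<bullet> x0 - ln (\<Sum>k\<in>S. w k * exp (a k \<bullet> x0))"
      unfolding ident by simp
  qed
qed

lemma d_I_nonneg: "d_I v I \<ge> 0"
  by (simp add: d_I_def Let_def)

lemma indic_vec_inj: "inj indic_vec"
proof (rule injI)
  fix I J :: "'m::finite set" assume "indic_vec I = (indic_vec J :: real^'m)"
  then have "\<forall>i. (if i \<in> I then 1 else 0 :: real) = (if i \<in> J then 1 else 0)"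
    by (simp add: indic_vec_def vec_eq_iff)
  then show "I = J" by (metis one_neq_zero subsetI subset_antisym)
qed

lemma indic_inner: "indic_vec I \<bullet> x = (\<Sum>i\<in>I. x $ i)" for x :: "real^'m::finite"
proof -
  have "indic_vec I \<bullet> x = (\<Sum>i\<in>UNIV. (if i \<in> I then x $ i else 0))"
    unfolding inner_vec_def indic_vec_def by (intro sum.cong) auto
  also have "\<dots> = (\<Sum>i\<in>I. x $ i)" by (simp add: sum.If_cases)
  finally show ?thesis .
qed

lemma outer_mult: "outer v *v x = (v \<bullet> x) *\<^sub>R v"
  by (simp add: outer_def matrix_vector_mult_def inner_vec_def vec_eq_iff sum_distrib_left mult.assoc mult.commute mult.left_commute)

lemma sum_mat_vec: "finite A \<Longrightarrow> (\<Sum>i\<in>A. M i) *v x = (\<Sum>i\<in>A. M i *v x)"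
  for M :: "'i \<Rightarrow> real^'n^'m"
  by (induct A rule: finite_induct) (auto simp: matrix_vector_mult_add_rdistrib)

lemma det_outer_nz:
  fixes v :: "'m::finite \<Rightarrow> real^'n"
  assumes spans: "span (range v) = UNIV"
  shows "det (\<Sum>i\<in>UNIV. outer (v i)) \<noteq> 0"
proof -
  let ?M = "\<Sum>i\<in>UNIV. outer (v i)"
  have Mx: "?M *v x = (\<Sum>i\<in>UNIV. (v i \<bullet> x) *\<^sub>R v i)" for x
    using sum_mat_vec[of UNIV "\<lambda>i. outer (v i)" x] by (simp add: outer_mult)
  have ker: "x = 0" if "?M *v x = 0" for x
  proof -
    have "0 = x \<bullet> (?M *v x)" using that by simp
    also have "\<dots> = (\<Sum>i\<in>UNIV. (v i \<bullet> x)^2)"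
      by (simp add: Mx inner_sum_right power2_eq_square inner_commute)
    finally have "(\<Sum>i\<in>UNIV. (v i \<bullet> x)^2) = 0" by simp
    then have "\<forall>i\<in>UNIV. (v i \<bullet> x)^2 = 0"
      by (subst sum_nonneg_eq_0_iff[symmetric]) auto
    then have orth: "\<And>y. y \<in> range v \<Longrightarrow> orthogonal x y"
      by (auto simp: orthogonal_def inner_commute)
    have "orthogonal x x" using orthogonal_to_span[of x "range v" x] orth spans by auto
    then show ?thesis by (simp add: orthogonal_def)
  qed
  then obtain B where "B ** ?M = mat 1" using matrix_left_invertible_ker[of ?M] by blast
  then have "det B * det ?M = 1" by (metis det_I det_mul)
  then show ?thesis by auto
qed

lemma inf_exp_sup:
  fixes g :: "'a \<Rightarrow> real"
  defines "s \<equiv> (SUP x. ereal (g x))"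
  shows "Inf ((\<lambda>x. exp (- g x)) ` UNIV) = (case s of ereal r \<Rightarrow> exp (- r) | _ \<Rightarrow> 0)"
    and "s \<noteq> - \<infinity>"
proof -
  let ?D = "Inf ((\<lambda>x. exp (- g x)) ` UNIV)"
  have bdd: "bdd_below ((\<lambda>x. exp (- g x)) ` UNIV)" by (rule bdd_belowI[of _ 0]) auto
  have Dle: "?D \<le> exp (- g x)" for x by (rule cInf_lower) (use bdd in auto)
  have D0: "?D \<ge> 0" by (rule cInf_greatest) auto
  have ge: "ereal (g x) \<le> s" for x unfolding s_def by (rule SUP_upper) simp
  then show sne: "s \<noteq> - \<infinity>" by (metis MInfty_neq_ereal(1) ereal_infty_less_eq(2))
  have key: "\<not> ereal (- ln ?D) < s" if "?D > 0"
  proof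
    assume "ereal (- ln ?D) < s"
    then obtain x where "ereal (- ln ?D) < ereal (g x)" unfolding s_def by (auto simp: less_SUP_iff)
    then have "- ln ?D < g x" by simp
    then have "exp (- g x) < exp (ln ?D)" by simp
    then show False using Dle[of x] that by simp
  qed
  show "?D = (case s of ereal r \<Rightarrow> exp (- r) | _ \<Rightarrow> 0)"
  proof (cases s)
    case (real r)
    have gr: "g x \<le> r" for x using ge[of x] real by simp
    have "exp (- r) \<le> ?D" by (rule cInf_greatest) (use gr in auto)
    moreover have "?D \<le> exp (- r)"
    proof (rule ccontr)
      assume "\<not> ?D \<le> exp (- r)"
      then have "?D > exp (-r)" by simp
      moreover then have "?D > 0" using exp_gt_zero[of "-r"] by linarith
      moreover then have "- ln ?D < r" using \<open>?D > exp (-r)\<close>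
        by (metis exp_gt_zero exp_ln ln_less_cancel_iff ln_exp minus_less_iff)
      ultimately show False using key real by simp
    qed
    ultimately show ?thesis using real by simp
  next
    case PInf
    have "\<not> ?D > 0" using key PInf by auto
    then show ?thesis using D0 PInf by simp
  next
    case MInf
    then show ?thesis using sne by simp
  qed
qed

theorem proposition6:
  fixes v :: "'m::finite \<Rightarrow> real^'n" and c :: "real^'m"
  assumes nonzero: "\<forall>i. v i \<noteq> 0"
    and spans: "span (range v) = UNIV"
    and cpos: "\<forall>i. c$i > 0"
    and csum: "(\<Sum>i\<in>UNIV. c$i) = real CARD('n)"
  shows "convex_on UNIV (phi v)
    \<and> D_const v c = (case phi_star v c of ereal r \<Rightarrow> exp (- r) | _ \<Rightarrow> 0)
    \<and> (D_const v c > 0 \<longleftrightarrow> c \<in> dom_phi_star v)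
    \<and> ((\<exists>lam. (\<forall>i. lam$i > 0) \<and> BL_ratio v c lam = D_const v c) \<longleftrightarrow>
         (\<exists>x. ereal (c \<bullet> x - phi v x) = phi_star v c))
    \<and> dom_phi_star v = K_poly v
    \<and> (c \<in> rel_interior (K_poly v) \<longrightarrow>
         (\<exists>lam. (\<forall>i. lam$i > 0) \<and> BL_ratio v c lam = D_const v c))"
proof -
  define S where "S = {I::'m set. card I = CARD('n) \<and> d_I v I \<noteq> 0}"
  have fS: "finite S" by simp
  have wpos: "\<forall>I\<in>S. d_I v I > 0"
    using d_I_nonneg[of v] unfolding S_def by (auto simp: less_le)
  have CBS: "det (\<Sum>i\<in>UNIV. lam i *\<^sub>R outer (v i)) = (\<Sum>I\<in>S. d_I v I * (\<Prod>i\<in>I. lam i))" for lam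
    unfolding cauchy_binet_outer S_def by (rule sum.mono_neutral_right) auto
  have Sne: "S \<noteq> {}"
  proof
    assume "S = {}"
    then have "det (\<Sum>i\<in>UNIV. (1::real) *\<^sub>R outer (v i)) = 0" using CBS[of "\<lambda>_. 1"] by simp
    then show False using det_outer_nz[OF spans] by simp
  qed
  define E where "E x = (\<Sum>I\<in>S. d_I v I * exp (indic_vec I \<bullet> x))" for x :: "real^'m"
  have Epos: "E x > 0" for x unfolding E_def using Sne wpos by (intro sum_pos) auto
  have detE: "det (\<Sum>i\<in>UNIV. exp (x $ i) *\<^sub>R outer (v i)) = E x" for x
    unfolding CBS E_def by (rule sum.cong) (auto simp: indic_inner exp_sum finite_subset)
  have phi_eq: "phi v = (\<lambda>x. ln (\<Sum>I\<in>S. d_I v I * exp (indic_vec I \<bullet> x)))"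
    by (rule ext) (simp add: phi_def detE E_def)
  define g where "g x = c \<bullet> x - phi v x" for x
  have BL: "BL_ratio v c lam = exp (- g (\<chi> i. ln (lam $ i)))" if lam: "\<forall>i. lam $ i > 0" for lam
  proof -
    define x where "x = (\<chi> i. ln (lam $ i))"
    have lx: "lam $ i = exp (x $ i)" for i using lam by (simp add: x_def)
    have "det (\<Sum>i\<in>UNIV. lam $ i *\<^sub>R outer (v i)) = exp (phi v x)"
      using detE[of x] Epos[of x] by (simp add: lx phi_def)
    moreover have "(\<Prod>i\<in>UNIV. (lam $ i) powr (c $ i)) = exp (c \<bullet> x)"
      by (simp add: lx powr_def inner_vec_def exp_sum mult.commute)
    ultimately show ?thesis
      by (simp add: BL_ratio_def g_def x_def[symmetric] exp_diff[symmetric] exp_minus_inverse)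
  qed
  have Rset: "BL_ratio v c ` {lam. \<forall>i. lam $ i > 0} = (\<lambda>x. exp (- g x)) ` UNIV"
  proof (intro set_eqI iffI)
    fix r assume "r \<in> BL_ratio v c ` {lam. \<forall>i. lam $ i > 0}"
    then show "r \<in> (\<lambda>x. exp (- g x)) ` UNIV" using BL by auto
  next
    fix r assume "r \<in> (\<lambda>x. exp (- g x)) ` UNIV"
    then obtain x where r: "r = exp (- g x)" by auto
    define lam where "lam = (\<chi> i. exp (x $ i))"
    have lp: "\<forall>i. lam $ i > 0" by (simp add: lam_def)
    have "(\<chi> i. ln (lam $ i)) = x" by (simp add: lam_def vec_eq_iff)
    then have "BL_ratio v c lam = r" using BL[OF lp] r by simp
    then show "r \<in> BL_ratio v c ` {lam. \<forall>i. lam $ i > 0}" using lp by blast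
  qed
  have Deq: "D_const v c = Inf ((\<lambda>x. exp (- g x)) ` UNIV)"
    unfolding D_const_def Rset ..
  have pse: "phi_star v c = (SUP x. ereal (g x))" unfolding phi_star_def g_def ..
  have P2: "D_const v c = (case phi_star v c of ereal r \<Rightarrow> exp (- r) | _ \<Rightarrow> 0)"
    unfolding Deq pse by (rule inf_exp_sup(1))
  have nm: "phi_star v c \<noteq> - \<infinity>" unfolding pse by (rule inf_exp_sup(2))
  have P3: "D_const v c > 0 \<longleftrightarrow> c \<in> dom_phi_star v"
    unfolding dom_phi_star_def using P2 nm by (cases "phi_star v c") auto
  have P4: "(\<exists>lam. (\<forall>i. lam$i > 0) \<and> BL_ratio v c lam = D_const v c) \<longleftrightarrow>
         (\<exists>x. ereal (c \<bullet> x - phi v x) = phi_star v c)"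
  proof
    assume "\<exists>lam. (\<forall>i. lam$i > 0) \<and> BL_ratio v c lam = D_const v c"
    then obtain lam where lam: "\<forall>i. lam$i > 0" "BL_ratio v c lam = D_const v c" by blast
    define x where "x = (\<chi> i. ln (lam $ i))"
    have ex: "exp (- g x) = D_const v c" using BL[OF lam(1)] lam(2) by (simp add: x_def)
    show "\<exists>x. ereal (c \<bullet> x - phi v x) = phi_star v c"
    proof (cases "phi_star v c")
      case (real r)
      then have "exp (- g x) = exp (- r)" using ex P2 by simp
      then have "g x = r" by simp
      then show ?thesis using real by (auto simp: g_def)
    next
      case PInf
      then show ?thesis using ex P2 by simp
    next
      case MInf
      then show ?thesis using nm by simp
    qed
  next
    assume "\<exists>x. ereal (c \<bullet> x - phi v x) = phi_star v c"
    then obtain x where x: "ereal (g x) = phi_star v c" by (auto simp: g_def)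
    define lam where "lam = (\<chi> i. exp (x $ i))"
    have lp: "\<forall>i. lam $ i > 0" by (simp add: lam_def)
    have "(\<chi> i. ln (lam $ i)) = x" by (simp add: lam_def vec_eq_iff)
    then have "BL_ratio v c lam = exp (- g x)" using BL[OF lp] by simp
    also have "\<dots> = D_const v c" using P2 x[symmetric] by simp
    finally show "\<exists>lam. (\<forall>i. lam$i > 0) \<and> BL_ratio v c lam = D_const v c" using lp by blast
  qed
  have Keq: "K_poly v = convex hull (indic_vec ` S)"
    unfolding K_poly_def S_def by (rule arg_cong[where f="\<lambda>X. convex hull X"]) auto
  have inj: "inj_on indic_vec S" using indic_vec_inj by (rule inj_on_subset) simp
  have P5: "dom_phi_star v = K_poly v"
  proof (intro set_eqI)
    fix y
    show "y \<in> dom_phi_star v \<longleftrightarrow> y \<in> K_poly v"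
      unfolding dom_phi_star_def phi_star_def Keq phi_eq
      using lse_dom[OF fS Sne wpos inj, of y] by simp
  qed
  have P6: "c \<in> rel_interior (K_poly v) \<longrightarrow> (\<exists>lam. (\<forall>i. lam$i > 0) \<and> BL_ratio v c lam = D_const v c)"
  proof
    assume "c \<in> rel_interior (K_poly v)"
    then obtain x0 where x0: "\<forall>x. g x \<le> g x0"
      using lse_max[OF Sne wpos inj, of c] unfolding Keq g_def phi_eq by auto
    have "phi_star v c = ereal (g x0)"
      unfolding pse
      by (rule antisym) (auto intro!: SUP_least SUP_upper2[of x0] simp: x0)
    then show "\<exists>lam. (\<forall>i. lam$i > 0) \<and> BL_ratio v c lam = D_const v c"
      using P4 by (auto simp: g_def)
  qed
  have P1: "convex_on UNIV (phi v)"
    unfolding phi_eq by (rule lse_convex[OF fS Sne wpos])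
  show ?thesis using P1 P2 P3 P4 P5 P6 by blast
qed

end
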